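(* Let $K\ge 1$ be an integer and let $R_1,\dots,R_K>0$. Define $$g_K(R_1,\dots,R_K)=\frac{1}{2\pi \mathrm{i}}\int_{c-\mathrm{i}\infty}^{c+\mathrm{i}\infty}\frac{e^{s}}{s\prod_{k=1}^{K}\left(\frac{s}{R_k\ln 2}-1\right)}\,ds,$$ where $c>\max\{R_1\ln 2,\dots,R_K\ln 2\}$ (the value does not depend on the choice of such $c$). Then for every $t\in\{1,\dots,K\}$, with $R_1,\dots,R_{t-1},R_{t+1},\dots,R_K$ held fixed, the function $R_t\mapsto g_K(R_1,\dots,R_K)$ is increasing and convex on $(0,\infty)$. Consequently, the asymptotic outage probability $$p_{out\_asy,K}=\pi^K f_{\mathbf h}(\mathbf 0)\prod_{k=1}^K\frac{\mathcal N_0}{P_k}\, g_K(R_1,\dots,R_K)$$ is, for each $t$, an increasing and convex function of $R_t$ when the other rates are fixed.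
   Context: Here $\mathrm{i}=\sqrt{-1}$. In the asymptotic outage probability, $P_1,\dots,P_K>0$ are transmit powers, $\mathcal N_0>0$ is the noise power, and $f_{\mathbf h}(\mathbf 0)>0$ is the value at $\mathbf h=\mathbf 0$ of the joint density of a (Beckmann-distributed, i.e. possibly improper complex Gaussian) channel vector $\mathbf h=(h_1,\dots,h_K)$ with nonsingular covariance; $f_{\mathbf h}(\mathbf 0)$ is a positive constant not depending on $R_1,\dots,R_K$. The quantity $R_k$ is the transmission rate of the $k$-th HARQ round. *)

theory Defs
  imports "HOL-Analysis.Analysis"
begin

definition hK :: "nat \<Rightarrow> (nat \<Rightarrow> real) \<Rightarrow> complex \<Rightarrow> complex" where
  "hK K R s = exp s / (s * (\<Prod>k\<in>{1..K}. s / complex_of_real (R k * ln 2) - 1))"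

definition cK :: "nat \<Rightarrow> (nat \<Rightarrow> real) \<Rightarrow> real" where
  "cK K R = 1 + Max ((\<lambda>k. R k * ln 2) ` {1..K})"

text \<open>g_K = (1/(2 pi i)) \<integral>_{c - i\<infinity>}^{c + i\<infinity>} hK(s) ds, parametrised by s = c + i y,
  ds = i dy.  The integral is real; we take its real part to obtain a real function.\<close>
definition gK :: "nat \<Rightarrow> (nat \<Rightarrow> real) \<Rightarrow> real" where
  "gK K R = Re ((1 / (2 * complex_of_real pi * \<i>)) *
      integral UNIV (\<lambda>y::real. hK K R (Complex (cK K R) y) * \<i>))"

definition p_out_asy :: "nat \<Rightarrow> real \<Rightarrow> real \<Rightarrow> (nat \<Rightarrow> real) \<Rightarrow> (nat \<Rightarrow> real) \<Rightarrow> real" where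
  "p_out_asy K f0 N0 P R = pi ^ K * f0 * (\<Prod>k\<in>{1..K}. N0 / P k) * gK K R"

end

theory Submission imports Defs "HOL-Complex_Analysis.Complex_Analysis" "HOL-Probability.Sinc_Integral" begin



lemma vert_linepath:
  fixes f :: "complex \<Rightarrow> complex"
  assumes T: "T > 0"
  shows "(f has_contour_integral I) (linepath (Complex c (-T)) (Complex c T)) \<longleftrightarrow>
         ((\<lambda>y. f (Complex c y) * \<i>) has_integral I) {-T..T}"
proof -
  let ?F = "\<lambda>y. f (Complex c y) * \<i>"
  have "(?F has_integral I) (cbox (-T) T) \<longleftrightarrow>
        ((\<lambda>x. ?F ((2*T) *\<^sub>R x + (-T))) has_integral I /\<^sub>R (2*T) ^ DIM(real))
          (cbox ((-T - (-T)) /\<^sub>R (2*T)) ((T - (-T)) /\<^sub>R (2*T)))"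
    by (rule has_integral_affinity_iff[symmetric]) (use T in simp)
  also have "cbox ((-T - (-T)) /\<^sub>R (2*T)) ((T - (-T)) /\<^sub>R (2*T)) = {0..1::real}"
    using T by simp
  also have "((\<lambda>x. ?F ((2*T) *\<^sub>R x + (-T))) has_integral I /\<^sub>R (2*T) ^ DIM(real)) {0..1} \<longleftrightarrow>
     ((\<lambda>x. (2*T) *\<^sub>R ?F ((2*T) *\<^sub>R x + (-T))) has_integral I) {0..1}"
    using has_integral_cmul_iff[of "2*T" "\<lambda>x. ?F ((2*T) *\<^sub>R x + (-T))" "I /\<^sub>R (2*T)" "{0..1}"] T
    by (simp only: scaleR_scaleR power_one_right DIM_real) simp
  also have "(\<lambda>x. (2*T) *\<^sub>R ?F ((2*T) *\<^sub>R x + (-T))) =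
      (\<lambda>x. f (linepath (Complex c (-T)) (Complex c T) x) * (Complex c T - Complex c (-T)))"
  proof
    fix x :: real
    have "linepath (Complex c (-T)) (Complex c T) x = Complex c (2*T*x - T)"
      by (simp add: linepath_def complex_eq_iff algebra_simps scaleR_conv_of_real)
    moreover have "Complex c T - Complex c (-T) = of_real (2*T) * \<i>"
      by (simp add: complex_eq_iff)
    ultimately show "(2*T) *\<^sub>R ?F ((2*T) *\<^sub>R x + (-T)) =
      f (linepath (Complex c (-T)) (Complex c T) x) * (Complex c T - Complex c (-T))"
      by (simp add: scaleR_conv_of_real algebra_simps)
  qed
  finally show ?thesis
    by (simp add: has_contour_integral_linepath)
qed




lemma deriv_exp_funpow: "(deriv ^^ n) (exp :: complex \<Rightarrow> complex) = exp"
proof (induction n)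
  case (Suc n)
  have "deriv (exp :: complex \<Rightarrow> complex) = exp"
    by (rule ext, rule DERIV_imp_deriv, rule DERIV_exp)
  then show ?case using Suc by simp
qed simp

lemma triangle_contour:
  fixes c T :: real and n :: nat
  assumes c: "c > 0" and T: "T > 0"
  defines "A \<equiv> Complex c (-T)" and "B \<equiv> Complex c T" and "C \<equiv> complex_of_real (-T)"
  shows "contour_integral (linepath A B +++ linepath B C +++ linepath C A) (\<lambda>z. exp z / z ^ Suc n)
           = 2 * pi * \<i> / fact n"
proof -
  let ?g = "linepath A B +++ linepath B C +++ linepath C A"
  let ?f = "\<lambda>z::complex. exp z / z ^ Suc n"
  have ncol: "\<not> collinear {A, B, C}"
  proof
    assume "collinear {A, B, C}"
    then have "collinear {0, A - B, C - B}"
      by (subst (asm) collinear_3) (auto simp: A_def)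
    then have "(C - B) / (A - B) \<in> \<real>"
      by (simp add: collinear_iff_Reals)
    moreover have "Im ((C - B) / (A - B)) = - (T + c) / (2*T)"
      using T by (simp add: A_def B_def C_def Im_divide power2_eq_square field_simps)
    ultimately show False using T c
      by (auto simp: complex_is_Real_iff divide_simps)
  qed
  have int0: "0 \<in> interior (convex hull {A, B, C})"
  proof -
    have "0 \<in> {v. \<exists>x y z. 0 < x \<and> 0 < y \<and> 0 < z \<and> x + y + z = 1 \<and> x *\<^sub>R A + y *\<^sub>R B + z *\<^sub>R C = v}"
    proof (intro CollectI exI conjI)
      show "0 < T / (2*(c+T))" "0 < T / (2*(c+T))" "0 < c / (c + T)" using c T by auto
      show "T / (2*(c+T)) + T / (2*(c+T)) + c / (c + T) = 1"
      proof -
        have "c + T > 0" using c T by simp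
        have h: "T / (2*(c+T)) = (T/(c+T))/2" by simp
        have "T / (2*(c+T)) + T / (2*(c+T)) = T / (c+T)"
          by (simp only: h field_sum_of_halves)
        moreover have "T / (c+T) + c / (c + T) = 1" using \<open>c + T > 0\<close>
          by (simp add: add_divide_distrib[symmetric])
        ultimately show ?thesis by simp
      qed
      show "(T / (2*(c+T))) *\<^sub>R A + (T / (2*(c+T))) *\<^sub>R B + (c / (c + T)) *\<^sub>R C = 0"
      proof -
        have "c + T > 0" using c T by simp
        have h: "T / (2*(c+T)) = (T/(c+T))/2" by simp
        have "T / (2*(c+T)) * c + T / (2*(c+T)) * c = T/(c+T) * c"
          by (simp only: h distrib_right[symmetric] field_sum_of_halves)
        then have "T / (2*(c+T)) * c + T / (2*(c+T)) * c + c / (c + T) * (-T) = 0"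
          by simp
        then show ?thesis by (simp add: A_def B_def C_def complex_eq_iff)
      qed
    qed
    then show ?thesis
      by (subst interior_convex_hull_3_minimal[OF ncol]) auto
  qed
  have wn: "winding_number ?g 0 = 1"
  proof -
    have "Im ((B - A) * cnj (B - 0)) = 2 * T * c"
      by (simp add: A_def B_def)
    then show ?thesis using winding_number_triangle[OF int0] T c by simp
  qed
  have notin: "0 \<notin> closed_segment A B" "0 \<notin> closed_segment B C" "0 \<notin> closed_segment C A"
    using int0 interior_of_triangle [of A B C] by auto
  have ci: "contour_integral ?g ?f = 2 * pi * \<i> * (\<Sum>p\<in>{0}. winding_number ?g p * residue ?f p)"
  proof (rule Residue_theorem[of UNIV])
    show "?f holomorphic_on UNIV - {0}" by (intro holomorphic_intros) auto
    show "valid_path ?g" by (intro valid_path_join) auto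
    show "path_image ?g \<subseteq> UNIV - {0}"
      using notin by (auto simp: path_image_join)
  qed auto
  have res: "residue ?f 0 = 1 / fact n"
    using residue_holomorphic_over_power'[of UNIV "exp :: complex \<Rightarrow> complex" n]
    by (simp add: deriv_exp_funpow holomorphic_intros)
  show ?thesis using ci res wn by simp
qed




lemma int_w: "integrable lborel (\<lambda>y::real. inverse (1 + y^2))"
  using integrable_inverse_1_plus_square by (simp add: set_integrable_def einterval_def)

lemma inv_sq_bound:
  fixes c y :: real assumes c: "c > 0"
  shows "inverse (c^2 + y^2) \<le> max 1 (1/c^2) * inverse (1 + y^2)"
proof -
  have pos: "c^2 + y^2 > 0" using c by (simp add: add_pos_nonneg)
  have "1 + y^2 \<le> max 1 (1/c^2) * (c^2 + y^2)"
  proof (cases "c \<ge> 1")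
    case True
    then have "1 \<le> c^2" by (simp add: one_le_power)
    moreover have "1 * (c^2 + y^2) \<le> max 1 (1/c^2) * (c^2 + y^2)"
      using pos by (intro mult_right_mono) auto
    ultimately show ?thesis by simp
  next
    case False
    then have "c^2 \<le> 1" using c by (simp add: power_le_one)
    then have "y^2 \<le> y^2 / c^2" using c by (simp add: le_divide_eq mult_left_le)
    moreover have "(1/c^2) * (c^2 + y^2) = 1 + y^2/c^2" using c by (simp add: field_simps)
    moreover have "(1/c^2) * (c^2 + y^2) \<le> max 1 (1/c^2) * (c^2 + y^2)"
      using pos by (intro mult_right_mono) auto
    ultimately show ?thesis by linarith
  qed
  moreover have "1 + y^2 > 0" by (simp add: add_pos_nonneg)
  ultimately show ?thesis using pos
    by (simp add: field_simps)
qed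

definition Mc :: "real \<Rightarrow> nat \<Rightarrow> real" where
  "Mc c n = exp c / c^(n-1) * max 1 (1/c^2)"

lemma line_bound:
  fixes c y :: real and n :: nat
  assumes c: "c > 0" and n: "n \<ge> 1"
  shows "norm (exp (Complex c y) / (Complex c y) ^ Suc n) \<le> Mc c n * inverse (1 + y^2)"
proof -
  let ?s = "Complex c y"
  have ns: "norm ?s ^ 2 = c^2 + y^2" by (simp add: complex_norm)
  have nc: "norm ?s \<ge> c"
    using abs_Re_le_cmod[of ?s] c by simp
  have "norm ?s ^ Suc n = norm ?s ^ 2 * norm ?s ^ (n - 1)"
    using n by (simp add: power_add[symmetric])
  also have "\<dots> \<ge> (c^2 + y^2) * c^(n-1)"
  proof -
    have "c^(n-1) \<le> norm ?s^(n-1)" by (rule power_mono) (use nc c in auto)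
    then show ?thesis unfolding ns by (intro mult_left_mono) auto
  qed
  finally have den: "norm ?s ^ Suc n \<ge> (c^2 + y^2) * c^(n-1)" .
  have pos: "(c^2 + y^2) * c^(n-1) > 0" using c by (simp add: add_pos_nonneg)
  have "norm (exp ?s / ?s ^ Suc n) = norm (exp ?s) / norm ?s ^ Suc n"
    by (simp only: norm_divide norm_power)
  also have "norm (exp ?s) = exp c" by simp
  finally have "norm (exp ?s / ?s ^ Suc n) = exp c / norm ?s ^ Suc n" .
  also have "\<dots> \<le> exp c / ((c^2 + y^2) * c^(n-1))"
    using den pos by (intro divide_left_mono) auto
  also have "\<dots> = exp c / c^(n-1) * inverse (c^2 + y^2)"
    by (simp add: field_simps)
  also have "\<dots> \<le> exp c / c^(n-1) * (max 1 (1/c^2) * inverse (1 + y^2))"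
    using inv_sq_bound[OF c, of y] c by (intro mult_left_mono) auto
  finally show ?thesis by (simp add: Mc_def mult.assoc)
qed

lemma line_integrable:
  fixes c :: real and n :: nat
  assumes c: "c > 0" and n: "n \<ge> 1"
  shows "integrable lborel (\<lambda>y. exp (Complex c y) / (Complex c y) ^ Suc n)"
proof -
  have i1: "integrable lborel (\<lambda>y. Mc c n * inverse (1 + y^2))"
    using int_w by simp
  have "continuous_on UNIV (\<lambda>y. exp (Complex c y) / (Complex c y) ^ Suc n)"
  proof -
    have cC: "continuous_on UNIV (\<lambda>y. Complex c y)"
      by (simp add: Complex_eq continuous_intros)
    show ?thesis
      by (intro continuous_on_divide continuous_on_exp continuous_on_power cC)
         (use c in \<open>auto simp: Complex_eq_0\<close>)
  qed
  then have m: "(\<lambda>y. exp (Complex c y) / (Complex c y) ^ Suc n) \<in> borel_measurable lborel"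
    by (simp add: borel_measurable_continuous_onI)
  have "Mc c n \<ge> 0" using c by (simp add: Mc_def)
  then have ae: "AE y in lborel. norm (exp (Complex c y) / (Complex c y) ^ Suc n) \<le> norm (Mc c n * inverse (1 + y^2))"
    using line_bound[OF c n] by (intro AE_I2) (simp add: abs_mult add_pos_nonneg)
  show ?thesis by (rule Bochner_Integration.integrable_bound[OF i1 m ae])
qed




lemma seg_props:
  fixes c T :: real
  assumes c: "c > 0" and T: "T \<ge> c"
    and z: "z \<in> closed_segment (Complex c T) (complex_of_real (-T)) \<union> closed_segment (complex_of_real (-T)) (Complex c (-T))"
  shows "Re z \<le> c \<and> (T - c) / 2 \<le> norm z"
  using z
proof
  assume "z \<in> closed_segment (Complex c T) (complex_of_real (-T))"
  then obtain u where u: "0 \<le> u" "u \<le> 1" "z = (1 - u) *\<^sub>R Complex c T + u *\<^sub>R complex_of_real (-T)"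
    by (auto simp: closed_segment_def)
  have re: "Re z = (1-u)*c - u*T" and im: "Im z = (1-u)*T" using u by simp_all
  have "Re z \<le> c"
  proof -
    have "0 \<le> u*T" "0 \<le> u*c" using u c T by auto
    moreover have "(1-u)*c = c - u*c" by (simp add: algebra_simps)
    ultimately show ?thesis using re by linarith
  qed
  moreover have "(T - c) / 2 \<le> norm z"
  proof (cases "u \<le> 1/2")
    case True
    have "(1/2)*T \<le> (1-u)*T" by (rule mult_right_mono) (use True T c in auto)
    then have "(T - c)/2 \<le> (1-u)*T" using c by (simp add: field_simps)
    also have "\<dots> \<le> norm z" using abs_Im_le_cmod[of z] im u T c by simp
    finally show ?thesis .
  next
    case False
    have "(1/2)*(T+c) \<le> u*(T+c)" by (rule mult_right_mono) (use False T c in auto)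
    moreover have "u*(T+c) = u*T + u*c" "(1-u)*c = c - u*c" by (simp_all add: algebra_simps)
    ultimately have "(T - c)/2 \<le> -((1-u)*c - u*T)" by (simp add: field_simps)
    also have "\<dots> \<le> norm z" using abs_Re_le_cmod[of z] re by simp
    finally show ?thesis .
  qed
  ultimately show ?thesis ..
next
  assume "z \<in> closed_segment (complex_of_real (-T)) (Complex c (-T))"
  then obtain u where u: "0 \<le> u" "u \<le> 1" "z = (1 - u) *\<^sub>R complex_of_real (-T) + u *\<^sub>R Complex c (-T)"
    by (auto simp: closed_segment_def)
  have re: "Re z = -(1-u)*T + u*c" and im: "Im z = -u*T" unfolding u(3) by (simp_all add: algebra_simps)
  have "Re z \<le> c"
  proof -
    have "0 \<le> (1-u)*T" using u c T by auto
    moreover have "u*c \<le> 1*c" using u c by (intro mult_right_mono) auto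
    ultimately show ?thesis using re by linarith
  qed
  moreover have "(T - c) / 2 \<le> norm z"
  proof (cases "u \<ge> 1/2")
    case True
    have "(1/2)*T \<le> u*T" by (rule mult_right_mono) (use True T c in auto)
    then have "(T - c)/2 \<le> u*T" using c by (simp add: field_simps)
    also have "\<dots> \<le> norm z" using abs_Im_le_cmod[of z] im u T c by simp
    finally show ?thesis .
  next
    case False
    have "u*(T+c) \<le> (1/2)*(T+c)" by (rule mult_right_mono) (use False T c in auto)
    moreover have "u*(T+c) = u*T + u*c" "(1-u)*T = T - u*T" by (simp_all add: algebra_simps)
    ultimately have "(T - c)/2 \<le> -(-(1-u)*T + u*c)" by (simp add: field_simps)
    also have "\<dots> \<le> norm z" using abs_Re_le_cmod[of z] re by simp
    finally show ?thesis .
  qed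
  ultimately show ?thesis ..
qed

lemma f_bound_far:
  fixes z :: complex and n :: nat and c :: real
  assumes n: "n \<ge> 1" and re: "Re z \<le> c" and nz: "1 \<le> r" "r \<le> norm z"
  shows "norm (exp z / z ^ Suc n) \<le> exp c / r^2"
proof -
  have "r^2 \<le> norm z ^ 2" using nz by (intro power_mono) auto
  also have "norm z ^ 2 \<le> norm z ^ Suc n" using nz n by (intro power_increasing) auto
  finally have d: "r^2 \<le> norm z ^ Suc n" .
  have "norm (exp z / z ^ Suc n) = exp (Re z) / norm z ^ Suc n"
    by (simp only: norm_divide norm_power norm_exp_eq_Re)
  also have "\<dots> \<le> exp c / norm z ^ Suc n"
    using re by (intro divide_right_mono) auto
  also have "\<dots> \<le> exp c / r^2"
  proof -
    have "norm z > 0" using nz by linarith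
    then have "0 < norm z ^ Suc n * r^2" using nz by (intro mult_pos_pos) auto
    then show ?thesis using d by (intro divide_left_mono) auto
  qed
  finally show ?thesis .
qed




lemma line_value:
  fixes c :: real and n :: nat
  assumes c: "c > 0" and n: "n \<ge> 1"
  shows "(LINT y|lborel. exp (Complex c y) / (Complex c y) ^ Suc n) = 2 * pi / fact n"
proof -
  define f where "f = (\<lambda>z::complex. exp z / z ^ Suc n)"
  define F where "F = (\<lambda>y. f (Complex c y) * \<i>)"
  have intF: "integrable lborel F"
    unfolding F_def f_def by (rule integrable_mult_left) (rule line_integrable[OF c n])
  define \<beta> where "\<beta> = (\<lambda>T::real. 2 * (exp c / ((T - c)/2)^2 * (2*T + c)))"
  have key: "norm (integral {-T..T} F - 2 * pi * \<i> / fact n) \<le> \<beta> T" if T: "T \<ge> c + 2" for T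
  proof -
    define A where "A = Complex c (-T)"
    define B where "B = Complex c T"
    define C where "C = complex_of_real (-T)"
    have Tpos: "T > 0" using T c by simp
    have far: "Re z \<le> c \<and> (T - c) / 2 \<le> norm z" if "z \<in> closed_segment B C \<union> closed_segment C A" for z
      using seg_props[OF c, of T z] that T by (simp add: A_def B_def C_def)
    have nz1: "z \<noteq> 0" if "z \<in> closed_segment B C \<union> closed_segment C A" for z
      using far[OF that] T by auto
    have nzAB: "z \<noteq> 0" if "z \<in> closed_segment A B" for z
    proof -
      from that obtain u where "z = (1-u) *\<^sub>R A + u *\<^sub>R B"
        by (auto simp: closed_segment_def)
      then have "Re z = (1-u) * c + u * c" by (simp add: A_def B_def)
      then have "Re z = c" by (simp add: algebra_simps)
      then show ?thesis using c by auto
    qed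
    have cont: "continuous_on S f" if "\<And>z. z \<in> S \<Longrightarrow> z \<noteq> 0" for S
      unfolding f_def using that by (intro continuous_intros) auto
    have iAB: "f contour_integrable_on linepath A B"
      by (intro contour_integrable_continuous_linepath cont nzAB)
    have iBC: "f contour_integrable_on linepath B C"
      by (intro contour_integrable_continuous_linepath cont nz1) auto
    have iCA: "f contour_integrable_on linepath C A"
      by (intro contour_integrable_continuous_linepath cont nz1) auto
    have "contour_integral (linepath A B +++ linepath B C +++ linepath C A) f
          = contour_integral (linepath A B) f + (contour_integral (linepath B C) f + contour_integral (linepath C A) f)"
      using iAB iBC iCA by (simp add: contour_integrable_joinI)
    moreover have "contour_integral (linepath A B +++ linepath B C +++ linepath C A) f = 2 * pi * \<i> / fact n"
      unfolding f_def A_def B_def C_def by (rule triangle_contour[OF c Tpos])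
    moreover have "contour_integral (linepath A B) f = integral {-T..T} F"
    proof -
      have "(f has_contour_integral contour_integral (linepath A B) f) (linepath A B)"
        using iAB by (rule has_contour_integral_integral)
      then have "(F has_integral contour_integral (linepath A B) f) {-T..T}"
        unfolding A_def B_def F_def using vert_linepath[OF Tpos] by blast
      then show ?thesis by (simp add: integral_unique)
    qed
    ultimately have eq: "integral {-T..T} F - 2 * pi * \<i> / fact n
        = - (contour_integral (linepath B C) f + contour_integral (linepath C A) f)"
      by (simp add: algebra_simps)
    have r1: "1 \<le> (T - c)/2" using T by simp
    have bnd: "norm (f z) \<le> exp c / ((T - c)/2)^2" if "z \<in> closed_segment B C \<union> closed_segment C A" for z
    proof -
      have "Re z \<le> c" "(T - c) / 2 \<le> norm z" using far[OF that] by auto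
      from f_bound_far[OF n this(1) r1 this(2)] show ?thesis unfolding f_def .
    qed
    have nBC: "norm (C - B) \<le> 2*T + c"
    proof -
      have "C - B = Complex (-(T+c)) (-T)" by (simp add: B_def C_def complex_eq_iff)
      then show ?thesis using cmod_le[of "C - B"] T c by simp
    qed
    have nCA: "norm (A - C) \<le> 2*T + c"
    proof -
      have "A - C = Complex (T+c) (-T)" by (simp add: A_def C_def complex_eq_iff)
      then show ?thesis using cmod_le[of "A - C"] T c by simp
    qed
    have e0: "exp c / ((T - c)/2)^2 \<ge> 0" by simp
    have b1: "norm (contour_integral (linepath B C) f) \<le> exp c / ((T - c)/2)^2 * norm (C - B)"
      by (rule contour_integral_bound_linepath[OF iBC e0]) (use bnd in blast)
    have b2: "norm (contour_integral (linepath C A) f) \<le> exp c / ((T - c)/2)^2 * norm (A - C)"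
      by (rule contour_integral_bound_linepath[OF iCA e0]) (use bnd in blast)
    have "norm (integral {-T..T} F - 2 * pi * \<i> / fact n)
        \<le> norm (contour_integral (linepath B C) f) + norm (contour_integral (linepath C A) f)"
      unfolding eq by (simp only: norm_minus_cancel) (rule norm_triangle_ineq)
    also have "\<dots> \<le> exp c / ((T - c)/2)^2 * (2*T + c) + exp c / ((T - c)/2)^2 * (2*T + c)"
      using b1 b2 mult_left_mono[OF nBC e0] mult_left_mono[OF nCA e0] by linarith
    also have "\<dots> = \<beta> T" by (simp add: \<beta>_def)
    finally show ?thesis .
  qed
  have bb: "\<beta> T \<le> 96 * exp c / T" if T: "T \<ge> 2*c + 2" for T
  proof -
    have Tp: "T > 0" using T c by simp
    have h1: "T/4 \<le> (T-c)/2" using T c by (simp add: field_simps)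
    have h2: "(T/4)^2 \<le> ((T-c)/2)^2" using h1 Tp by (intro power_mono) auto
    have h3: "exp c / ((T-c)/2)^2 \<le> exp c / (T/4)^2"
    proof -
      have "0 < (T/4)^2" using Tp by simp
      moreover have "0 < ((T-c)/2)^2" using h1 Tp by simp
      ultimately show ?thesis using h2 by (intro divide_left_mono) auto
    qed
    have h4: "2*T + c \<le> 3*T" using T c by simp
    have "exp c / ((T-c)/2)^2 * (2*T + c) \<le> exp c / (T/4)^2 * (3*T)"
      using h3 h4 c T by (intro mult_mono) auto
    also have "exp c / (T/4)^2 * (3*T) = 48 * exp c / T"
      using Tp by (simp add: field_simps power2_eq_square)
    finally show ?thesis unfolding \<beta>_def by simp
  qed
  have lim1: "((\<lambda>T. integral {-T..T} F) \<longlongrightarrow> 2 * pi * \<i> / fact n) at_top"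
  proof -
    have t0: "((\<lambda>T. 96 * exp c / T) \<longlongrightarrow> 0) at_top"
      by (intro tendsto_divide_0[OF tendsto_const] filterlim_at_top_imp_at_infinity[OF filterlim_ident])
    have ev: "eventually (\<lambda>T. norm (integral {-T..T} F - 2 * pi * \<i> / fact n) \<le> 96 * exp c / T) at_top"
      using eventually_ge_at_top[of "2*c+2"]
    proof (rule eventually_mono)
      fix T :: real assume T2: "2*c+2 \<le> T"
      then have "c + 2 \<le> T" using c by linarith
      from order_trans[OF key[OF this] bb[OF T2]]
      show "norm (integral {-T..T} F - 2 * pi * \<i> / fact n) \<le> 96 * exp c / T" .
    qed
    have "((\<lambda>T. integral {-T..T} F - 2 * pi * \<i> / fact n) \<longlongrightarrow> 0) at_top"
      by (rule Lim_null_comparison[OF ev t0])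
    then show ?thesis by (simp add: LIM_zero_iff)
  qed
  have lim2: "((\<lambda>T. integral {-T..T} F) \<longlongrightarrow> (LINT y|lborel. F y)) at_top"
  proof -
    have mF: "F \<in> borel_measurable lborel" using intF by auto
    have "((\<lambda>T. LINT y|lborel. indicator {-T..T} y *\<^sub>R F y) \<longlongrightarrow> (LINT y|lborel. F y)) at_top"
    proof (rule integral_dominated_convergence_at_top[where w = "\<lambda>y. norm (F y)"])
      show "F \<in> borel_measurable lborel" by (rule mF)
      show "\<And>T. (\<lambda>y. indicator {-T..T} y *\<^sub>R F y) \<in> borel_measurable lborel"
        using mF by (intro borel_measurable_scaleR borel_measurable_indicator) auto
      show "integrable lborel (\<lambda>y. norm (F y))" using intF by simp
      show "AE y in lborel. ((\<lambda>T. indicator {-T..T} y *\<^sub>R F y) \<longlongrightarrow> F y) at_top"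
      proof (rule AE_I2)
        fix y :: real
        have "eventually (\<lambda>T. indicator {-T..T} y *\<^sub>R F y = F y) at_top"
          using eventually_ge_at_top[of "\<bar>y\<bar>"] by (rule eventually_mono) (auto simp: indicator_def)
        from tendsto_cong[OF this] show "((\<lambda>T. indicator {-T..T} y *\<^sub>R F y) \<longlongrightarrow> F y) at_top"
          by simp
      qed
      show "\<forall>\<^sub>F T in at_top. AE y in lborel. norm (indicator {-T..T} y *\<^sub>R F y) \<le> norm (F y)"
        by (intro always_eventually allI AE_I2) (auto simp: indicator_def)
    qed
    moreover have "(LINT y|lborel. indicator {-T..T} y *\<^sub>R F y) = integral {-T..T} F" for T
    proof -
      have "set_integrable lborel {-T..T} F"
        unfolding set_integrable_def by (rule integrable_mult_indicator) (use intF in auto)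
      from set_borel_integral_eq_integral(2)[OF this] show ?thesis
        by (simp add: set_lebesgue_integral_def)
    qed
    ultimately show ?thesis by simp
  qed
  have "(LINT y|lborel. F y) = 2 * pi * \<i> / fact n"
    using tendsto_unique[OF _ lim2 lim1] by simp
  then have "(LINT y|lborel. f (Complex c y)) * \<i> = 2 * pi * \<i> / fact n"
    unfolding F_def by simp
  then have "(LINT y|lborel. f (Complex c y)) * \<i> = (2 * pi / fact n) * \<i>"
    by simp
  then show ?thesis unfolding f_def
    using mult_cancel_right[of "LINT y|lborel. exp (Complex c y) / Complex c y ^ Suc n" \<i> "2 * pi / fact n"]
    by simp
qed




definition geo :: "real \<Rightarrow> complex fps" where
  "geo a = Abs_fps (\<lambda>j. if j = 0 then 0 else complex_of_real (a^j))"

lemma geo_nth: "geo a $ j = (if j = 0 then 0 else complex_of_real (a^j))"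
  by (simp add: geo_def)

lemma geo_sums:
  assumes "norm w * a < 1" "a \<ge> 0"
  shows "(\<lambda>j. geo a $ j * w^j) sums (of_real a * w / (1 - of_real a * w))"
proof -
  let ?z = "complex_of_real a * w"
  have nz: "norm ?z < 1" using assms by (simp add: norm_mult mult.commute)
  then have z1: "?z \<noteq> 1" by auto
  have "(\<lambda>n. ?z^n - (if n = 0 then 1 else 0)) sums (1 / (1 - ?z) - 1)"
    using sums_diff[OF geometric_sums[OF nz] sums_single[of 0 "\<lambda>_. 1::complex"]] by simp
  moreover have "(\<lambda>n. ?z^n - (if n = 0 then 1 else 0)) = (\<lambda>j. geo a $ j * w^j)"
    by (auto simp: geo_nth power_mult_distrib)
  moreover have "1 / (1 - ?z) - 1 = ?z / (1 - ?z)"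
    using z1 by (simp add: field_simps)
  ultimately show ?thesis by simp
qed

lemma geo_conv:
  assumes "a \<ge> 0" "r \<ge> 0" "r * a < 1"
  shows "ereal r \<le> fps_conv_radius (geo a)"
proof -
  have "summable (\<lambda>j. geo a $ j * (complex_of_real r)^j)"
    using geo_sums[of "complex_of_real r" a] assms by (auto intro: sums_summable)
  from conv_radius_geI[OF this] show ?thesis using assms by (simp add: fps_conv_radius_def)
qed

lemma eval_geo:
  assumes "norm w * a < 1" "a \<ge> 0"
  shows "eval_fps (geo a) w = of_real a * w / (1 - of_real a * w)"
  using geo_sums[OF assms] by (simp add: eval_fps_def sums_iff)

lemma prod_conv:
  fixes f :: "'a \<Rightarrow> complex fps"
  assumes "finite A" "\<And>k. k \<in> A \<Longrightarrow> ereal r \<le> fps_conv_radius (f k)"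
  shows "ereal r \<le> fps_conv_radius (\<Prod>k\<in>A. f k)"
  using assms
proof (induction A rule: finite_induct)
  case (insert x F)
  have "ereal r \<le> min (fps_conv_radius (f x)) (fps_conv_radius (\<Prod>k\<in>F. f k))"
    using insert by auto
  also have "\<dots> \<le> fps_conv_radius (f x * (\<Prod>k\<in>F. f k))" by (rule fps_conv_radius_mult)
  finally show ?case using insert by simp
qed simp

lemma prod_eval:
  fixes f :: "'a \<Rightarrow> complex fps"
  assumes "finite A" "\<And>k. k \<in> A \<Longrightarrow> ereal r \<le> fps_conv_radius (f k)" "norm w < r"
  shows "eval_fps (\<Prod>k\<in>A. f k) w = (\<Prod>k\<in>A. eval_fps (f k) w)"
  using assms
proof (induction A rule: finite_induct)
  case (insert x F)
  have "ereal (norm w) < ereal r" using insert by simp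
  also have "ereal r \<le> fps_conv_radius (f x)" using insert by auto
  finally have 1: "ereal (norm w) < fps_conv_radius (f x)" .
  have "ereal (norm w) < ereal r" using insert by simp
  also have "ereal r \<le> fps_conv_radius (\<Prod>k\<in>F. f k)" using insert by (intro prod_conv) auto
  finally have 2: "ereal (norm w) < fps_conv_radius (\<Prod>k\<in>F. f k)" .
  show ?case using insert eval_fps_mult[OF 1 2] by simp
qed simp

lemma prod_nth0:
  fixes f :: "'a \<Rightarrow> complex fps"
  assumes "finite A"
  shows "(\<Prod>k\<in>A. f k) $ 0 = (\<Prod>k\<in>A. f k $ 0)"
  using assms by (induction A rule: finite_induct) auto

lemma prod_real_nonneg:
  fixes f :: "'a \<Rightarrow> complex fps"
  assumes "finite A" "\<And>k j. k \<in> A \<Longrightarrow> Im (f k $ j) = 0 \<and> Re (f k $ j) \<ge> 0"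
  shows "Im ((\<Prod>k\<in>A. f k) $ j) = 0 \<and> Re ((\<Prod>k\<in>A. f k) $ j) \<ge> 0"
  using assms
proof (induction A arbitrary: j rule: finite_induct)
  case empty
  then show ?case by (simp add: fps_one_nth)
next
  case (insert x F)
  let ?g = "\<Prod>k\<in>F. f k"
  have hf: "Im (f x $ i) = 0 \<and> Re (f x $ i) \<ge> 0" for i using insert.prems by auto
  have hg: "Im (?g $ i) = 0 \<and> Re (?g $ i) \<ge> 0" for i using insert by auto
  have "(\<Prod>k\<in>insert x F. f k) $ j = (\<Sum>i=0..j. f x $ i * ?g $ (j - i))"
    using insert by (simp add: fps_mult_nth)
  moreover have "Im (\<Sum>i=0..j. f x $ i * ?g $ (j - i)) = 0"
    using hf hg by (simp add: Im_sum)
  moreover have "Re (\<Sum>i=0..j. f x $ i * ?g $ (j - i)) \<ge> 0"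
    using hf hg by (simp add: Re_sum sum_nonneg)
  ultimately show ?case by simp
qed



lemma pow_convex_ineq:
  fixes x y t :: real
  assumes "x \<ge> 0" "y \<ge> 0" "0 \<le> t" "t \<le> 1"
  shows "((1-t)*x + t*y)^i \<le> (1-t)*x^i + t*y^i"
proof -
  have cv: "convex_on {0::real..} (\<lambda>x. x^i)"
  proof (cases "even i")
    case True
    then show ?thesis using convex_power_even convex_on_subset by blast
  next
    case False
    then show ?thesis using convex_power_odd by blast
  qed
  from convex_onD[OF cv, of t x y] assms show ?thesis by simp
qed

definition Tm :: "real \<Rightarrow> (nat \<Rightarrow> real) \<Rightarrow> nat \<Rightarrow> real \<Rightarrow> real" where
  "Tm L q n x = (\<Sum>i=0..n. (if i = 0 then 0 else (x*L)^i) * q (n-i)) / fact n"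

lemma Tm_mono:
  assumes "L > 0" "\<And>m. q m \<ge> 0" "0 < x" "x \<le> y"
  shows "Tm L q n x \<le> Tm L q n y"
  unfolding Tm_def
proof (intro divide_right_mono sum_mono)
  fix i assume "i \<in> {0..n}"
  have "(x*L)^i \<le> (y*L)^i" using assms by (intro power_mono mult_right_mono) auto
  then show "(if i = 0 then 0 else (x*L)^i) * q (n-i) \<le> (if i = 0 then 0 else (y*L)^i) * q (n-i)"
    using assms(2)[of "n-i"] by (auto intro: mult_right_mono)
qed auto

lemma Tm_strict:
  assumes "L > 0" "\<And>m. q m \<ge> 0" "q m0 > 0" "0 < x" "x < y"
  shows "Tm L q (Suc m0) x < Tm L q (Suc m0) y"
  unfolding Tm_def
proof (intro divide_strict_right_mono sum_strict_mono_ex1)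
  show "\<forall>i\<in>{0..Suc m0}. (if i = 0 then 0 else (x*L)^i) * q (Suc m0-i) \<le> (if i = 0 then 0 else (y*L)^i) * q (Suc m0-i)"
  proof
    fix i assume "i \<in> {0..Suc m0}"
    have "(x*L)^i \<le> (y*L)^i" using assms by (intro power_mono mult_right_mono) auto
    then show "(if i = 0 then 0 else (x*L)^i) * q (Suc m0-i) \<le> (if i = 0 then 0 else (y*L)^i) * q (Suc m0-i)"
      using assms(2)[of "Suc m0-i"] by (auto intro: mult_right_mono)
  qed
  show "\<exists>i\<in>{0..Suc m0}. (if i = 0 then 0 else (x*L)^i) * q (Suc m0-i) < (if i = 0 then 0 else (y*L)^i) * q (Suc m0-i)"
  proof (rule bexI[of _ 1])
    have "x*L < y*L" using assms by simp
    then show "(if 1 = (0::nat) then 0 else (x*L)^1) * q (Suc m0-1) < (if 1 = (0::nat) then 0 else (y*L)^1) * q (Suc m0-1)"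
      using assms(3) by (simp add: mult_strict_right_mono)
  qed auto
qed auto

lemma Tm_convex:
  assumes "L > 0" "\<And>m. q m \<ge> 0" "0 < x" "0 < y" "0 \<le> t" "t \<le> 1"
  shows "Tm L q n ((1-t)*x + t*y) \<le> (1-t) * Tm L q n x + t * Tm L q n y"
proof -
  let ?C = "\<lambda>i z. (if i = 0 then 0 else (z*L)^i) * q (n-i)"
  have "?C i ((1-t)*x + t*y) \<le> (1-t) * ?C i x + t * ?C i y" for i
  proof (cases "i = 0")
    case False
    have "(((1-t)*x + t*y)*L)^i = ((1-t)*(x*L) + t*(y*L))^i" by (simp add: algebra_simps)
    also have "\<dots> \<le> (1-t)*(x*L)^i + t*(y*L)^i"
      using assms by (intro pow_convex_ineq) auto
    finally have h: "(((1-t)*x + t*y)*L)^i \<le> (1-t)*(x*L)^i + t*(y*L)^i" .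
    have "(((1-t)*x + t*y)*L)^i * q (n-i) \<le> ((1-t)*(x*L)^i + t*(y*L)^i) * q (n-i)"
      by (rule mult_right_mono[OF h]) (use assms(2) in auto)
    then show ?thesis using False by (simp add: distrib_right mult.assoc)
  qed simp
  then have "(\<Sum>i=0..n. ?C i ((1-t)*x + t*y)) \<le> (\<Sum>i=0..n. (1-t) * ?C i x + t * ?C i y)"
    by (intro sum_mono)
  also have "\<dots> = (1-t) * (\<Sum>i=0..n. ?C i x) + t * (\<Sum>i=0..n. ?C i y)"
    by (simp add: sum.distrib sum_distrib_left)
  finally show ?thesis unfolding Tm_def
    by (simp add: divide_right_mono add_divide_distrib[symmetric])
qed

lemma abstract_mono_convex:
  fixes q :: "nat \<Rightarrow> real" and L :: real and G :: "real \<Rightarrow> real"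
  assumes L: "L > 0" and q: "\<And>m. q m \<ge> 0" and q0: "q m0 > 0"
    and S: "\<And>x. x > 0 \<Longrightarrow> (\<lambda>n. Tm L q n x) sums G x"
  shows "strict_mono_on {0<..} G \<and> convex_on {0<..} G"
proof
  show "strict_mono_on {0<..} G"
  proof (rule strict_mono_onI)
    fix r s :: real assume r: "r \<in> {0<..}" and s: "s \<in> {0<..}" and rs: "r < s"
    have "(\<lambda>n. Tm L q n s - Tm L q n r) sums (G s - G r)"
      using S r s by (intro sums_diff) auto
    moreover have "0 < suminf (\<lambda>n. Tm L q n s - Tm L q n r)"
    proof (rule suminf_pos2)
      show "summable (\<lambda>n. Tm L q n s - Tm L q n r)" using calculation by (rule sums_summable)
      show "\<And>n. 0 \<le> Tm L q n s - Tm L q n r" using Tm_mono[of L q r s] L q r rs by simp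
      show "0 < Tm L q (Suc m0) s - Tm L q (Suc m0) r" using Tm_strict[of L q m0 r s] L q q0 r rs by simp
    qed
    ultimately show "G r < G s" by (simp add: sums_iff)
  qed
  show "convex_on {0<..} G"
  proof (rule convex_onI)
    fix t x y :: real assume t: "0 < t" "t < 1" and x: "x \<in> {0<..}" and y: "y \<in> {0<..}"
    have z: "(1 - t) *\<^sub>R x + t *\<^sub>R y = (1-t)*x + t*y" by simp
    have xp: "x > 0" and yp: "y > 0" using x y by auto
    have "0 < (1-t)*x" using t xp by simp
    moreover have "0 < t*y" using t yp by simp
    ultimately have zpos: "(1-t)*x + t*y > 0" by simp
    have s1: "(\<lambda>n. Tm L q n ((1-t)*x + t*y)) sums G ((1-t)*x + t*y)" by (rule S[OF zpos])
    have s2: "(\<lambda>n. (1-t) * Tm L q n x + t * Tm L q n y) sums ((1-t) * G x + t * G y)"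
      by (intro sums_add sums_mult S xp yp)
    have le: "\<And>n. Tm L q n ((1-t)*x + t*y) \<le> (1-t) * Tm L q n x + t * Tm L q n y"
      by (rule Tm_convex[OF L q xp yp]) (use t in auto)
    show "G ((1 - t) *\<^sub>R x + t *\<^sub>R y) \<le> (1 - t) * G x + t * G y"
      unfolding z by (rule sums_le[OF le s1 s2])
  qed simp
qed


lemma ereal_lt_le: "(x::real) < r \<Longrightarrow> ereal r \<le> R \<Longrightarrow> ereal x < R"
  using less_le_trans[of "ereal x" "ereal r" R] by simp

lemma Mc_eq: "c > 0 \<Longrightarrow> n \<ge> 1 \<Longrightarrow> Mc c n = c * exp c * max 1 (1/c^2) * (1/c)^n"
  by (cases n) (auto simp: Mc_def field_simps power_divide)

lemma gK_series:
  fixes K :: nat and R :: "nat \<Rightarrow> real"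
  assumes K: "K \<ge> 1" and Rpos: "\<And>k. k \<in> {1..K} \<Longrightarrow> R k > 0"
  shows "(\<lambda>n. Re ((\<Prod>k\<in>{1..K}. geo (R k * ln 2)) $ n) / fact n) sums gK K R"
proof -
  define a where "a = (\<lambda>k. R k * ln 2)"
  define P where "P = (\<Prod>k\<in>{1..K}. geo (a k))"
  define M where "M = Max (a ` {1..K})"
  define c where "c = cK K R"
  have c_eq: "c = 1 + M" by (simp add: c_def cK_def M_def a_def)
  have apos: "a k > 0" if "k \<in> {1..K}" for k using Rpos[OF that] by (simp add: a_def)
  have aM: "a k \<le> M" if "k \<in> {1..K}" for k unfolding M_def using that by (intro Max_ge) auto
  have M0: "M > 0" using apos[of 1] aM[of 1] K by force
  have c1: "c > 1" using c_eq M0 by simp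
  have c0: "c > 0" using c1 by simp
  define r where "r = 2 / (1 + 2*M)"
  have r0: "r > 0" using M0 by (simp add: r_def)
  have ra: "r * a k < 1" if "k \<in> {1..K}" for k
  proof -
    have "r * a k \<le> r * M" using aM[OF that] r0 by simp
    also have "r * M < 1" using M0 by (simp add: r_def field_simps)
    finally show ?thesis .
  qed
  have cr: "1 / c < r" using M0 by (simp add: c_eq r_def field_simps)
  have convk: "ereal r \<le> fps_conv_radius (geo (a k))" if "k \<in> {1..K}" for k
    using apos[OF that] r0 ra[OF that] by (intro geo_conv) auto
  have convP: "ereal r \<le> fps_conv_radius P"
    unfolding P_def by (intro prod_conv convk) auto
  have P0: "P $ 0 = 0"
  proof -
    have "P $ 0 = (\<Prod>k\<in>{1..K}. geo (a k) $ 0)" unfolding P_def by (rule prod_nth0) simp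
    also have "\<dots> = 0" using K by (auto simp: geo_nth intro!: bexI[of _ 1])
    finally show ?thesis .
  qed
  define s where "s = (\<lambda>y. Complex c y)"
  have s_norm: "norm (s y) \<ge> c" for y using abs_Re_le_cmod[of "s y"] c0 by (simp add: s_def)
  have s_nz: "s y \<noteq> 0" for y using s_norm[of y] c0 by auto
  have w_norm: "norm (1 / s y) < r" for y
  proof -
    have "norm (1 / s y) = 1 / norm (s y)" by (simp add: norm_divide)
    also have "\<dots> \<le> 1 / c"
    proof -
      have "norm (s y) > 0" using s_norm[of y] c0 by linarith
      then show ?thesis using s_norm[of y] c0 by (intro divide_left_mono) (auto intro: mult_pos_pos)
    qed
    finally show ?thesis using cr by simp
  qed
  define u where "u = (\<lambda>n y. P $ n * (exp (s y) / s y ^ Suc n))"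
  have hK_sums: "(\<lambda>n. u n y) sums hK K R (s y)" for y
  proof -
    have sa: "s y \<noteq> of_real (a k)" if "k \<in> {1..K}" for k
    proof
      assume "s y = of_real (a k)"
      then have "c = a k" by (simp add: s_def complex_eq_iff)
      then show False using aM[OF that] c_eq by simp
    qed
    have fac: "1 / (s y / of_real (a k) - 1) = eval_fps (geo (a k)) (1 / s y)" if "k \<in> {1..K}" for k
    proof -
      have "norm (1 / s y) * a k < 1"
      proof -
        have "norm (1 / s y) * a k \<le> r * a k"
          using w_norm[of y] apos[OF that] by (intro mult_right_mono) auto
        then show ?thesis using ra[OF that] by simp
      qed
      then have "eval_fps (geo (a k)) (1 / s y) = of_real (a k) * (1 / s y) / (1 - of_real (a k) * (1 / s y))"
        using apos[OF that] by (intro eval_geo) auto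
      also have "\<dots> = 1 / (s y / of_real (a k) - 1)"
        using s_nz[of y] sa[OF that] apos[OF that] by (simp add: field_simps)
      finally show ?thesis by simp
    qed
    have "hK K R (s y) = exp (s y) / s y * (1 / (\<Prod>k\<in>{1..K}. s y / of_real (a k) - 1))"
      by (simp add: hK_def a_def)
    also have "1 / (\<Prod>k\<in>{1..K}. s y / of_real (a k) - 1) = (\<Prod>k\<in>{1..K}. 1 / (s y / of_real (a k) - 1))"
      using prod_inversef[of "\<lambda>k. s y / of_real (a k) - 1" "{1..K}"] by (simp add: o_def divide_inverse)
    also have "\<dots> = (\<Prod>k\<in>{1..K}. eval_fps (geo (a k)) (1 / s y))"
      by (rule prod.cong) (auto simp: fac)
    also have "\<dots> = eval_fps P (1 / s y)"
      unfolding P_def by (rule prod_eval[symmetric, OF _ convk w_norm]) auto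
    finally have hk: "hK K R (s y) = exp (s y) / s y * eval_fps P (1 / s y)" .
    have "ereal (norm (1 / s y)) < fps_conv_radius P"
      using w_norm[of y] convP by (rule ereal_lt_le)
    from sums_mult[OF sums_eval_fps[OF this], of "exp (s y) / s y"]
    have "(\<lambda>n. exp (s y) / s y * (P $ n * (1 / s y) ^ n)) sums (exp (s y) / s y * eval_fps P (1 / s y))" .
    moreover have "exp (s y) / s y * (P $ n * (1 / s y) ^ n) = u n y" for n
      using s_nz[of y] by (simp add: u_def field_simps power_divide)
    ultimately show ?thesis using hk by simp
  qed
  have u_int: "integrable lborel (u n)" for n
  proof (cases "n = 0")
    case True then show ?thesis by (simp add: u_def P0)
  next
    case False
    then show ?thesis unfolding u_def s_def
      by (intro integrable_mult_right line_integrable[OF c0]) auto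
  qed
  have u_val: "(LINT y|lborel. u n y) = P $ n * (2 * pi / fact n)" for n
  proof (cases "n = 0")
    case True then show ?thesis by (simp add: u_def P0)
  next
    case False
    have "(LINT y|lborel. u n y) = P $ n * (LINT y|lborel. exp (s y) / s y ^ Suc n)"
      unfolding u_def by (rule integral_mult_right_zero)
    also have "(LINT y|lborel. exp (s y) / s y ^ Suc n) = 2 * pi / fact n"
      unfolding s_def by (rule line_value[OF c0]) (use False in simp)
    finally show ?thesis .
  qed
  have u_sum_norm: "summable (\<lambda>n. norm (u n y))" for y
  proof -
    have "ereal (norm (1 / s y)) < fps_conv_radius P"
      using w_norm[of y] convP by (rule ereal_lt_le)
    from summable_mult2[OF norm_summable_fps[OF this], of "norm (exp (s y) / s y)"]
    have "summable (\<lambda>n. norm (P $ n * (1 / s y) ^ n) * norm (exp (s y) / s y))" .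
    moreover have "norm (P $ n * (1 / s y) ^ n) * norm (exp (s y) / s y) = norm (u n y)" for n
    proof -
      have "P $ n * (1 / s y) ^ n * (exp (s y) / s y) = u n y"
        using s_nz[of y] by (simp add: u_def field_simps power_divide)
      then show ?thesis by (metis norm_mult)
    qed
    ultimately show ?thesis by simp
  qed
  define W where "W = (LINT y|lborel. inverse (1 + (y::real)^2))"
  have W0: "W \<ge> 0" unfolding W_def by (intro integral_nonneg_AE) (auto intro!: AE_I2 add_pos_nonneg)
  define Kc where "Kc = c * exp c * max 1 (1/c^2) * W"
  have int_norm_bound: "(LINT y|lborel. norm (u n y)) \<le> norm (P $ n) * (1/c)^n * Kc" for n
  proof (cases "n = 0")
    case True then show ?thesis by (simp add: u_def P0)
  next
    case False
    then have n1: "n \<ge> 1" by simp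
    have eqf: "(\<lambda>y. norm (u n y)) = (\<lambda>y. norm (P $ n) * norm (exp (s y) / s y ^ Suc n))"
      unfolding u_def by (simp only: norm_mult)
    have "(LINT y|lborel. norm (u n y)) = norm (P $ n) * (LINT y|lborel. norm (exp (s y) / s y ^ Suc n))"
      by (simp only: eqf integral_mult_right_zero)
    also have "(LINT y|lborel. norm (exp (s y) / s y ^ Suc n)) \<le> (LINT y|lborel. Mc c n * inverse (1 + y^2))"
    proof (rule integral_mono)
      show "integrable lborel (\<lambda>y. norm (exp (s y) / s y ^ Suc n))"
        unfolding s_def using line_integrable[OF c0 n1] by simp
      show "integrable lborel (\<lambda>y. Mc c n * inverse (1 + y^2))" using int_w by simp
      show "\<And>y. y \<in> space lborel \<Longrightarrow> norm (exp (s y) / s y ^ Suc n) \<le> Mc c n * inverse (1 + y^2)"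
        unfolding s_def using line_bound[OF c0 n1] by simp
    qed
    also have "(LINT y|lborel. Mc c n * inverse (1 + y^2)) = Mc c n * W"
      by (simp add: W_def)
    finally have "(LINT y|lborel. norm (u n y)) \<le> norm (P $ n) * (Mc c n * W)"
      by (simp add: mult_left_mono)
    also have "\<dots> = norm (P $ n) * (1/c)^n * Kc"
      using Mc_eq[OF c0 n1] by (simp add: Kc_def)
    finally show ?thesis .
  qed
  have hc: "cmod (1 / complex_of_real c) = 1/c" using c0 by (simp add: norm_divide)
  have sum_int: "summable (\<lambda>n. LINT y|lborel. norm (u n y))"
  proof (rule summable_comparison_test')
    have "ereal (norm (complex_of_real (1/c))) < fps_conv_radius P"
    proof -
      have "norm (complex_of_real (1/c)) = 1/c" using c0 by (simp only: norm_of_real) simp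
      then have "norm (complex_of_real (1/c)) < r" using cr by simp
      then show ?thesis by (rule ereal_lt_le[OF _ convP])
    qed
    from summable_mult2[OF norm_summable_fps[OF this], of Kc]
    show "summable (\<lambda>n. norm (P $ n) * (1/c)^n * Kc)"
      using c0 hc by (simp add: norm_mult norm_power abs_of_pos)
    show "norm (LINT y|lborel. norm (u n y)) \<le> norm (P $ n) * (1/c)^n * Kc" for n
      using int_norm_bound[of n] by (simp add: integral_nonneg_AE)
  qed
  have meas: "\<And>n. integrable lborel (u n)" by (rule u_int)
  have SI: "(\<lambda>n. LINT y|lborel. u n y) sums (LINT y|lborel. (\<Sum>n. u n y))"
    by (rule sums_integral[OF meas _ sum_int]) (auto intro!: AE_I2 u_sum_norm)
  have II: "integrable lborel (\<lambda>y. \<Sum>n. u n y)"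
    by (rule integrable_suminf[OF meas _ sum_int]) (auto intro!: AE_I2 u_sum_norm)
  have SU: "(\<lambda>y. \<Sum>n. u n y) = (\<lambda>y. hK K R (s y))"
    using hK_sums by (auto simp: sums_iff)
  have S1: "(\<lambda>n. P $ n * (2 * pi / fact n)) sums (LINT y|lborel. hK K R (s y))"
    using SI unfolding u_val SU .
  have I1: "integrable lborel (\<lambda>y. hK K R (s y))" using II unfolding SU .
  have I2: "integrable lborel (\<lambda>y. hK K R (Complex c y) * \<i>)"
    using I1 unfolding s_def by (rule integrable_mult_left)
  have "integral UNIV (\<lambda>y. hK K R (Complex c y) * \<i>) = (LINT y|lborel. hK K R (s y) * \<i>)"
    unfolding integral_lborel[OF I2] s_def ..
  also have "\<dots> = (LINT y|lborel. hK K R (s y)) * \<i>" by simp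
  finally have ieq: "integral UNIV (\<lambda>y. hK K R (Complex c y) * \<i>) = (LINT y|lborel. hK K R (s y)) * \<i>" .
  have alg: "1 / (2 * complex_of_real pi * \<i>) * (X * \<i>) = X / complex_of_real (2 * pi)" for X
    by (simp add: field_simps)
  have gK_eq: "gK K R = Re ((LINT y|lborel. hK K R (s y)) / (complex_of_real (2 * pi)))"
    unfolding gK_def c_def[symmetric] ieq alg ..
  have "(\<lambda>n. P $ n * (complex_of_real (2 * pi) / fact n) / (complex_of_real (2 * pi))) sums ((LINT y|lborel. hK K R (s y)) / (complex_of_real (2 * pi)))"
    using sums_divide[OF S1, of "complex_of_real (2 * pi)"] by simp
  from sums_Re[OF this] have S2: "(\<lambda>n. Re (P $ n * (complex_of_real (2 * pi) / fact n) / (complex_of_real (2 * pi)))) sums Re ((LINT y|lborel. hK K R (s y)) / (complex_of_real (2 * pi)))" .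
  have "Re (P $ n * (complex_of_real (2 * pi) / fact n) / (complex_of_real (2 * pi))) = Re (P $ n) / fact n" for n
  proof -
    have "P $ n * (complex_of_real (2 * pi) / fact n) / (complex_of_real (2 * pi)) = P $ n / complex_of_real (fact n)"
      by (simp add: field_simps)
    then show ?thesis by (simp only: Re_divide_of_real)
  qed
  with S2 have "(\<lambda>n. Re (P $ n) / fact n) sums Re ((LINT y|lborel. hK K R (s y)) / (complex_of_real (2 * pi)))"
    by simp
  then show ?thesis unfolding gK_eq P_def a_def .
qed


theorem theorem1:
  fixes K :: nat and R P :: "nat \<Rightarrow> real" and N0 f0 :: real and t :: nat
  assumes "K \<ge> 1"
    and "\<And>k. k \<in> {1..K} \<Longrightarrow> R k > 0"
    and "\<And>k. k \<in> {1..K} \<Longrightarrow> P k > 0"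
    and "N0 > 0" and "f0 > 0"
    and "t \<in> {1..K}"
  shows "strict_mono_on {0<..} (\<lambda>x. gK K (R(t := x)))
       \<and> convex_on {0<..} (\<lambda>x. gK K (R(t := x)))
       \<and> strict_mono_on {0<..} (\<lambda>x. p_out_asy K f0 N0 P (R(t := x)))
       \<and> convex_on {0<..} (\<lambda>x. p_out_asy K f0 N0 P (R(t := x)))"
proof -
  note K = assms(1) and Rpos = assms(2) and Ppos = assms(3) and N0 = assms(4) and f0 = assms(5)
    and t = assms(6)
  define L where "L = ln (2::real)"
  have L: "L > 0" by (simp add: L_def)
  define A where "A = {1..K} - {t}"
  define Q where "Q = (\<Prod>k\<in>A. geo (R k * ln 2))"
  define q where "q = (\<lambda>m. Re (Q $ m))"
  have Areal: "Im (geo (R k * ln 2) $ j) = 0 \<and> Re (geo (R k * ln 2) $ j) \<ge> 0" if "k \<in> A" for k j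
  proof -
    have "R k > 0" using that Rpos by (auto simp: A_def)
    then show ?thesis by (simp add: geo_nth)
  qed
  have Qreal: "Im (Q $ m) = 0 \<and> Re (Q $ m) \<ge> 0" for m
    unfolding Q_def by (rule prod_real_nonneg) (simp add: A_def, rule Areal)
  have q_nonneg: "\<And>m. q m \<ge> 0" using Qreal by (simp add: q_def)
  have "Q \<noteq> 0"
  proof -
    have "geo (R k * ln 2) \<noteq> 0" if "k \<in> A" for k
    proof
      assume "geo (R k * ln 2) = 0"
      then have "geo (R k * ln 2) $ 1 = 0" by simp
      moreover have "R k > 0" using that Rpos by (auto simp: A_def)
      ultimately show False by (simp add: geo_nth)
    qed
    then show ?thesis unfolding Q_def by (simp add: A_def)
  qed
  then obtain m0 where "Q $ m0 \<noteq> 0" by (auto simp: fps_nonzero_nth)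
  then have q0: "q m0 > 0" using Qreal[of m0] by (auto simp: q_def complex_eq_iff)
  have S: "(\<lambda>n. Tm L q n x) sums gK K (R(t := x))" if x: "x > 0" for x
  proof -
    have Rx: "\<And>k. k \<in> {1..K} \<Longrightarrow> (R(t := x)) k > 0" using Rpos x by auto
    have prod_eq: "(\<Prod>k\<in>{1..K}. geo ((R(t := x)) k * ln 2)) = geo (x * ln 2) * Q"
    proof -
      have "(\<Prod>k\<in>{1..K}. geo ((R(t := x)) k * ln 2)) = geo ((R(t := x)) t * ln 2) * (\<Prod>k\<in>A. geo ((R(t := x)) k * ln 2))"
        unfolding A_def using t by (intro prod.remove) auto
      also have "(\<Prod>k\<in>A. geo ((R(t := x)) k * ln 2)) = Q"
        unfolding Q_def by (rule prod.cong) (auto simp: A_def)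
      finally show ?thesis by simp
    qed
    have coeff: "Re ((geo (x * ln 2) * Q) $ n) / fact n = Tm L q n x" for n
    proof -
      have "Re ((geo (x * ln 2) * Q) $ n) = (\<Sum>i=0..n. Re (geo (x * ln 2) $ i * Q $ (n - i)))"
        by (simp add: fps_mult_nth Re_sum)
      also have "\<dots> = (\<Sum>i=0..n. (if i = 0 then 0 else (x*L)^i) * q (n-i))"
      proof (rule sum.cong)
        fix i assume "i \<in> {0..n}"
        show "Re (geo (x * ln 2) $ i * Q $ (n - i)) = (if i = 0 then 0 else (x*L)^i) * q (n-i)"
          using Qreal[of "n-i"] by (simp add: geo_nth q_def L_def)
      qed simp
      finally show ?thesis by (simp add: Tm_def)
    qed
    have "(\<lambda>n. Re ((\<Prod>k\<in>{1..K}. geo ((R(t := x)) k * ln 2)) $ n) / fact n) sums gK K (R(t := x))"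
      by (rule gK_series[of K "R(t := x)"]) (use K Rx in auto)
    then show ?thesis unfolding prod_eq coeff .
  qed
  have G: "strict_mono_on {0<..} (\<lambda>x. gK K (R(t := x))) \<and> convex_on {0<..} (\<lambda>x. gK K (R(t := x)))"
    by (rule abstract_mono_convex[OF L q_nonneg q0 S])
  define C where "C = pi ^ K * f0 * (\<Prod>k\<in>{1..K}. N0 / P k)"
  have C: "C > 0" unfolding C_def using f0 N0 Ppos by (intro mult_pos_pos prod_pos) auto
  have pe: "(\<lambda>x. p_out_asy K f0 N0 P (R(t := x))) = (\<lambda>x. C * gK K (R(t := x)))"
    by (simp add: p_out_asy_def C_def)
  have "strict_mono_on {0<..} (\<lambda>x. C * gK K (R(t := x)))"
  proof (rule strict_mono_onI)
    fix r s :: real assume rs: "r \<in> {0<..}" "s \<in> {0<..}" "r < s"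
    from G have sm: "strict_mono_on {0<..} (\<lambda>x. gK K (R(t := x)))" by blast
    have "gK K (R(t := r)) < gK K (R(t := s))"
      using strict_mono_onD[OF sm rs] by simp
    then show "C * gK K (R(t := r)) < C * gK K (R(t := s))" using C by simp
  qed
  moreover have "convex_on {0<..} (\<lambda>x. C * gK K (R(t := x)))"
    using G C by (intro convex_on_cmul) auto
  ultimately show ?thesis using G unfolding pe by blast
qed

end
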